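(* Let $q$ be an even prime power which is a square, and assume that the affine space $AG(3,q)$ contains a translation cap of size $q^{3/2}$. Then for every integer $N>2$ there exists a subset $K$ of the affine space $AG(N,q)$ with $|K|\le q^{N/2}$ such that every point of $AG(N,q)\setminus K$ lies on at least $(q-2)/2$ distinct secants of $K$.
   Context: $AG(N,q)$ denotes the $N$-dimensional affine space over $\mathbb{F}_q$, identified with $\mathbb{F}_q^N$. A cap is a set of points no three of which are collinear. A translation cap in $AG(N,q)$ is a cap $K$ on which some group of translations of $AG(N,q)$ acts regularly (equivalently, $K$ is a coset $x+T$ of an additive subgroup $T$ of $\mathbb{F}_q^N$). A secant of a point set $K$ is a line meeting $K$ in at least two points. *)

theory Defs
  imports Complex_Main
begin

text \<open>The affine space AG(N,q) over a finite field 'a (q = CARD('a)) is modelled as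
  F_q^N, i.e. functions nat => 'a vanishing outside {0..<N}.\<close>

definition aspace :: "nat \<Rightarrow> (nat \<Rightarrow> 'a::field) set" where
  "aspace N = {x. \<forall>i\<ge>N. x i = 0}"

definition aline :: "(nat \<Rightarrow> 'a::field) \<Rightarrow> (nat \<Rightarrow> 'a) \<Rightarrow> (nat \<Rightarrow> 'a) set" where
  "aline a d = {(\<lambda>i. a i + t * d i) | t. True}"

definition is_line :: "nat \<Rightarrow> (nat \<Rightarrow> 'a::field) set \<Rightarrow> bool" where
  "is_line N L \<longleftrightarrow> (\<exists>a d. a \<in> aspace N \<and> d \<in> aspace N \<and> (\<exists>i. d i \<noteq> 0) \<and> L = aline a d)"

definition is_cap :: "nat \<Rightarrow> (nat \<Rightarrow> 'a::field) set \<Rightarrow> bool" where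
  "is_cap N K \<longleftrightarrow> K \<subseteq> aspace N \<and>
     (\<forall>x\<in>K. \<forall>y\<in>K. \<forall>z\<in>K. x \<noteq> y \<and> y \<noteq> z \<and> x \<noteq> z \<longrightarrow>
        \<not> (\<exists>L. is_line N L \<and> x \<in> L \<and> y \<in> L \<and> z \<in> L))"

definition additive_subgroup :: "nat \<Rightarrow> (nat \<Rightarrow> 'a::field) set \<Rightarrow> bool" where
  "additive_subgroup N T \<longleftrightarrow> T \<subseteq> aspace N \<and> (\<lambda>i. 0) \<in> T \<and>
     (\<forall>x\<in>T. \<forall>y\<in>T. (\<lambda>i. x i + y i) \<in> T) \<and> (\<forall>x\<in>T. (\<lambda>i. - x i) \<in> T)"

definition is_translation_cap :: "nat \<Rightarrow> (nat \<Rightarrow> 'a::field) set \<Rightarrow> bool" where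
  "is_translation_cap N K \<longleftrightarrow> is_cap N K \<and>
     (\<exists>x T. x \<in> aspace N \<and> additive_subgroup N T \<and> K = (\<lambda>t i. x i + t i) ` T)"

definition is_secant :: "nat \<Rightarrow> (nat \<Rightarrow> 'a::field) set \<Rightarrow> (nat \<Rightarrow> 'a) set \<Rightarrow> bool" where
  "is_secant N K L \<longleftrightarrow> is_line N L \<and> (\<exists>x\<in>L \<inter> K. \<exists>y\<in>L \<inter> K. x \<noteq> y)"

end

theory Submission imports Defs "HOL-Library.Z2" "HOL-Library.Disjoint_Sets" begin

lemma char2:
  assumes "even (card (UNIV :: 'a::{field,finite} set))"
  shows "(1::'a) + 1 = 0"
proof (rule ccontr)
  assume ne: "(1::'a) + 1 \<noteq> 0"
  have hx: "- x \<noteq> x" if "x \<noteq> 0" for x :: 'a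
  proof
    assume "- x = x"
    then have "(1+1) * x = 0" by (simp add: algebra_simps)
    with ne that show False by simp
  qed
  have "(\<Sum>x\<in>UNIV - {0::'a}. (1::bit)) = 0"
    by (rule sum_involution_eq_0[where h = uminus]) (auto simp: hx)
  then have "of_nat (card (UNIV - {0::'a})) = (0::bit)" by simp
  then have "even (of_nat (card (UNIV - {0::'a})) :: bit)" by simp
  then have "even (card (UNIV - {0::'a}))"
    by (simp only: even_of_nat)
  moreover have "card (UNIV - {0::'a}) = card (UNIV::'a set) - 1" by (simp add: card_Diff_singleton)
  moreover have "card (UNIV::'a set) > 0" by (simp add: card_gt_0_iff)
  ultimately show False using assms by auto
qed

lemma c2_add_self: "(1::'a::field) + 1 = 0 \<Longrightarrow> x + x = (0::'a)"
  by (metis distrib_right mult_1 mult_zero_left)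

lemma c2_minus: "(1::'a::field) + 1 = 0 \<Longrightarrow> - x = (x::'a)"
  by (metis add_eq_0_iff c2_add_self)

lemma c2_sq: "(1::'a::field) + 1 = 0 \<Longrightarrow> (x + y)^2 = x^2 + (y::'a)^2"
proof -
  assume h: "(1::'a) + 1 = 0"
  have "(x+y)^2 = x^2 + y^2 + (1+1)*x*y" by (simp add: power2_eq_square algebra_simps)
  then show ?thesis using h by simp
qed

lemma aspace_Suc:
  "aspace (Suc n) = (\<lambda>(y,t). y(n:=t)) ` (aspace n \<times> (UNIV :: 'a::field set))"
proof (rule set_eqI, rule iffI)
  fix x :: "nat \<Rightarrow> 'a" assume x: "x \<in> aspace (Suc n)"
  have "x = (\<lambda>(y,t). y(n:=t)) (x(n:=0), x n)" by auto
  moreover have "x(n:=0) \<in> aspace n" using x by (auto simp: aspace_def)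
  ultimately show "x \<in> (\<lambda>(y,t). y(n:=t)) ` (aspace n \<times> UNIV)" by blast
next
  fix x :: "nat \<Rightarrow> 'a" assume "x \<in> (\<lambda>(y,t). y(n:=t)) ` (aspace n \<times> UNIV)"
  then show "x \<in> aspace (Suc n)" by (auto simp: aspace_def)
qed

lemma aspace_card: "finite (aspace n :: (nat \<Rightarrow> 'a::{field,finite}) set) \<and>
   card (aspace n :: (nat \<Rightarrow> 'a) set) = card (UNIV::'a set) ^ n"
proof (induction n)
  case 0
  have "aspace 0 = {(\<lambda>i. 0::'a)}" by (auto simp: aspace_def)
  then show ?case by simp
next
  case (Suc n)
  have inj: "inj_on (\<lambda>(y,t). y(n:=t)) (aspace n \<times> (UNIV :: 'a set))"
  proof (rule inj_onI, clarify)
    fix y t y' t' assume y: "y \<in> aspace n" "y' \<in> aspace n" and e: "y(n := t::'a) = y'(n := t')"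
    from e have "t = t'" by (metis fun_upd_same)
    moreover have "y = y'"
    proof
      fix i show "y i = y' i"
        using y e by (cases "i = n") (auto simp: aspace_def dest: fun_cong[where x=i])
    qed
    ultimately show "y = y' \<and> t = t'" by simp
  qed
  show ?case using Suc inj by (simp add: aspace_Suc card_image card_cartesian_product)
qed

lemma aline_sub: "a \<in> aspace N \<Longrightarrow> d \<in> aspace N \<Longrightarrow> aline a d \<subseteq> aspace N"
  by (auto simp: aline_def aspace_def)


definition good :: "nat \<Rightarrow> (nat \<Rightarrow> 'a::{field,finite}) set \<Rightarrow> nat \<Rightarrow> bool" where
  "good n S m \<longleftrightarrow> S \<subseteq> aspace n \<and> (\<lambda>i. 0) \<in> S \<and> (\<forall>x\<in>S. \<forall>y\<in>S. (\<lambda>i. x i + y i) \<in> S)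
     \<and> card S = m ^ n \<and>
     (\<forall>s x y. s \<noteq> 0 \<longrightarrow> s \<noteq> 1 \<longrightarrow> x \<in> S \<longrightarrow> y \<in> S \<longrightarrow> x = (\<lambda>i. s * y i) \<longrightarrow> y = (\<lambda>i. 0))"

definition extS :: "nat \<Rightarrow> (nat \<Rightarrow> 'a::field) set \<Rightarrow> (nat \<Rightarrow> 'a) set" where
  "extS n S = {x. (\<lambda>i. if i < n then x i else 0) \<in> S \<and> x (Suc n) = (x n)^2 \<and> (\<forall>i\<ge>Suc (Suc n). x i = 0)}"

lemma extS_img:
  assumes "S \<subseteq> aspace n"
  shows "extS n S = (\<lambda>(y,t). y(n:=t, Suc n := t^2)) ` (S \<times> UNIV)"
proof (rule set_eqI, rule iffI)
  fix x assume x: "x \<in> extS n S"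
  define y where "y = (\<lambda>i. if i < n then x i else 0)"
  have "y \<in> S" using x by (simp add: extS_def y_def)
  moreover have "x = y(n := x n, Suc n := (x n)^2)"
  proof
    fix i show "x i = (y(n := x n, Suc n := (x n)^2)) i"
      using x by (cases "i < n"; cases "i = n"; cases "i = Suc n") (auto simp: extS_def y_def)
  qed
  ultimately show "x \<in> (\<lambda>(y,t). y(n:=t, Suc n := t^2)) ` (S \<times> UNIV)"
  proof -
    assume yS: "y \<in> S" and xe: "x = y(n := x n, Suc n := (x n)^2)"
    show ?thesis
    proof (rule image_eqI[where x="(y, x n)"])
      show "x = (\<lambda>(y,t). y(n:=t, Suc n := t^2)) (y, x n)" unfolding prod.case by (rule xe)
      show "(y, x n) \<in> S \<times> UNIV" using yS by simp
    qed
  qed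
next
  fix x assume "x \<in> (\<lambda>(y,t). y(n:=t, Suc n := t^2)) ` (S \<times> UNIV)"
  then obtain y t where y: "y \<in> S" and xe: "x = y(n:=t, Suc n := t^2)" by auto
  have ya: "\<And>i. i \<ge> n \<Longrightarrow> y i = 0" using y assms by (auto simp: aspace_def)
  have "(\<lambda>i. if i < n then x i else 0) = y"
  proof
    fix i show "(if i < n then x i else 0) = y i" using ya xe by auto
  qed
  then have r1: "(\<lambda>i. if i < n then x i else 0) \<in> S" using y by simp
  have r2: "x (Suc n) = (x n)^2" using xe by simp
  have r3: "\<forall>i\<ge>Suc (Suc n). x i = 0" using xe ya by simp
  show "x \<in> extS n S" unfolding extS_def using r1 r2 r3 by blast
qed

lemma extS_card:
  fixes S :: "(nat \<Rightarrow> 'a::{field,finite}) set"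
  assumes "S \<subseteq> aspace n"
  shows "card (extS n S) = card S * card (UNIV :: 'a::{field,finite} set)"
proof -
  have inj: "inj_on (\<lambda>(y,t). y(n:=t, Suc n := t^2)) (S \<times> (UNIV :: 'a set))"
  proof (rule inj_onI, clarify)
    fix y t y' t' assume y: "y \<in> S" "y' \<in> S" and e: "y(n := t::'a, Suc n := t^2) = y'(n := t', Suc n := t'^2)"
    from e have "t = t'" by (metis fun_upd_same fun_upd_other n_not_Suc_n)
    moreover have "y = y'"
    proof
      fix i show "y i = y' i"
      proof (cases "i < n")
        case True then show ?thesis using e by (auto dest: fun_cong[where x=i])
      next
        case False
        then have "n \<le> i" by simp
        then have "y i = 0" "y' i = 0" using y assms by (auto simp: aspace_def subset_iff)
        then show ?thesis by simp
      qed
    qed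
    ultimately show "y = y' \<and> t = t'" by simp
  qed
  show ?thesis using inj by (simp add: extS_img[OF assms] card_image card_cartesian_product)
qed

lemma good_ext:
  assumes g: "good n S m" and c2: "(1::'a::{field,finite}) + 1 = 0" and q: "card (UNIV::'a set) = m^2"
  shows "good (Suc (Suc n)) (extS n (S :: (nat \<Rightarrow> 'a) set)) m"
proof -
  have Ss: "S \<subseteq> aspace n" and S0: "(\<lambda>i. 0) \<in> S" and SA: "\<forall>x\<in>S. \<forall>y\<in>S. (\<lambda>i. x i + y i) \<in> S"
    and Sc: "card S = m ^ n"
    and P4: "\<forall>s x y. s \<noteq> 0 \<longrightarrow> s \<noteq> 1 \<longrightarrow> x \<in> S \<longrightarrow> y \<in> S \<longrightarrow> x = (\<lambda>i. s * y i) \<longrightarrow> y = (\<lambda>i. 0)"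
    using g unfolding good_def by blast+
  have sub: "extS n S \<subseteq> aspace (Suc (Suc n))" by (auto simp: extS_def aspace_def)
  have zero: "(\<lambda>i. 0) \<in> extS n S"
  proof -
    have "(\<lambda>i::nat. if i < n then (0::'a) else 0) = (\<lambda>i. 0)" by auto
    then show ?thesis using S0 by (simp add: extS_def)
  qed
  have add: "\<forall>x\<in>extS n S. \<forall>y\<in>extS n S. (\<lambda>i. x i + y i) \<in> extS n S"
  proof (intro ballI)
    fix x y assume x: "x \<in> extS n S" and y: "y \<in> extS n S"
    have rx: "(\<lambda>i. if i < n then x i else 0) \<in> S" using x unfolding extS_def by blast
    have ry: "(\<lambda>i. if i < n then y i else 0) \<in> S" using y unfolding extS_def by blast
    have e: "(\<lambda>i. if i < n then x i + y i else 0) = (\<lambda>i. (\<lambda>i. if i < n then x i else 0) i + (\<lambda>i. if i < n then y i else 0) i)"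
      by (auto simp: fun_eq_iff)
    have r: "(\<lambda>i. if i < n then x i + y i else 0) \<in> S"
      unfolding e using bspec[OF bspec[OF SA rx] ry] by simp
    have x2: "x (Suc n) = (x n)^2" and y2: "y (Suc n) = (y n)^2" using x y unfolding extS_def by blast+
    have xz: "\<forall>i\<ge>Suc (Suc n). x i = 0" and yz: "\<forall>i\<ge>Suc (Suc n). y i = 0" using x y unfolding extS_def by blast+
    have "x (Suc n) + y (Suc n) = (x n + y n)^2" using x2 y2 c2_sq[OF c2] by simp
    then show "(\<lambda>i. x i + y i) \<in> extS n S"
      unfolding extS_def using r xz yz by simp
  qed
  have "card (extS n S) = m^n * m^2"
    using extS_card[OF Ss] Sc q by simp
  then have card: "card (extS n S) = m ^ Suc (Suc n)"
    by (simp add: power2_eq_square)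
  have prp: "\<forall>s x y. s \<noteq> 0 \<longrightarrow> s \<noteq> 1 \<longrightarrow> x \<in> extS n S \<longrightarrow> y \<in> extS n S \<longrightarrow> x = (\<lambda>i. s * y i) \<longrightarrow> y = (\<lambda>i. 0)"
  proof (intro allI impI)
    fix s :: 'a and x y assume s0: "s \<noteq> 0" and s1: "s \<noteq> 1" and x: "x \<in> extS n S" and y: "y \<in> extS n S"
      and xy: "x = (\<lambda>i. s * y i)"
    have rx: "(\<lambda>i. if i < n then x i else 0) \<in> S" using x unfolding extS_def by blast
    have ry: "(\<lambda>i. if i < n then y i else 0) \<in> S" using y unfolding extS_def by blast
    have "(\<lambda>i. if i < n then x i else 0) = (\<lambda>i. s * (\<lambda>i. if i < n then y i else 0) i)"
      using xy by (auto simp: fun_eq_iff)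
    then have ez: "(\<lambda>i. if i < n then y i else 0) = (\<lambda>i. 0)"
      using P4 s0 s1 rx ry by blast
    have low: "y i = 0" if "i < n" for i using fun_cong[OF ez, of i] that by simp
    have x2: "x (Suc n) = (x n)^2" and y2: "y (Suc n) = (y n)^2" using x y unfolding extS_def by blast+
    have yz: "\<forall>i\<ge>Suc (Suc n). y i = 0" using y unfolding extS_def by blast
    have "s * y (Suc n) = (s * y n)^2" using x2 xy by simp
    then have "s * (y n)^2 = s^2 * (y n)^2" using y2 by (simp add: power_mult_distrib)
    then have "(y n)^2 * (s * (s - 1)) = 0" by (simp add: algebra_simps power2_eq_square)
    then have yn: "y n = 0" using s0 s1 by simp
    then have ysn: "y (Suc n) = 0" using y2 by simp
    show "y = (\<lambda>i. 0)"
    proof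
      fix i show "y i = 0"
      proof (cases "i < n")
        case True then show ?thesis by (rule low)
      next
        case False
        then have "i = n \<or> i = Suc n \<or> i \<ge> Suc (Suc n)" by auto
        then show ?thesis using yn ysn yz by auto
      qed
    qed
  qed
  show ?thesis unfolding good_def by (intro conjI sub zero add card prp)
qed


fun build :: "nat \<Rightarrow> (nat \<Rightarrow> 'a::field) set \<Rightarrow> nat \<Rightarrow> (nat \<Rightarrow> 'a) set" where
  "build n S 0 = S"
| "build n S (Suc k) = extS (n + 2 * k) (build n S k)"

lemma good_build:
  assumes g: "good n S m" and c2: "(1::'a::{field,finite}) + 1 = 0" and q: "card (UNIV::'a set) = m^2"
  shows "good (n + 2 * k) (build n (S :: (nat \<Rightarrow> 'a) set) k) m"
proof (induction k)
  case 0 then show ?case using g by simp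
next
  case (Suc k)
  have "good (Suc (Suc (n + 2 * k))) (extS (n + 2 * k) (build n S k)) m"
    by (rule good_ext[OF Suc c2 q])
  then show ?case by simp
qed

lemma good_0: "good 0 {(\<lambda>i. 0 :: 'a::{field,finite})} m"
  by (auto simp: good_def aspace_def)

lemma good_3:
  fixes C :: "(nat \<Rightarrow> 'a::{field,finite}) set"
  assumes tc: "is_translation_cap 3 C" and cC: "card C = m^3"
  shows "\<exists>T :: (nat \<Rightarrow> 'a) set. good 3 T m"
proof -
  obtain x0 T where x0: "x0 \<in> aspace 3" and T: "additive_subgroup 3 T"
    and CT: "C = (\<lambda>t i. x0 i + t i) ` T"
    using tc unfolding is_translation_cap_def by blast
  have cap: "is_cap 3 C" using tc unfolding is_translation_cap_def by blast
  have inj: "inj_on (\<lambda>t i. x0 i + t i) T"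
  proof (rule inj_onI)
    fix u v assume "(\<lambda>i. x0 i + u i) = (\<lambda>i. x0 i + v i)"
    then show "u = v" by (simp add: fun_eq_iff)
  qed
  have cT: "card T = m^3" using cC CT inj by (simp add: card_image)
  have TA: "T \<subseteq> aspace 3" "(\<lambda>i. 0) \<in> T" "\<forall>x\<in>T. \<forall>y\<in>T. (\<lambda>i. x i + y i) \<in> T"
    using T unfolding additive_subgroup_def by blast+
  have prp: "\<forall>s x y. s \<noteq> 0 \<longrightarrow> s \<noteq> 1 \<longrightarrow> x \<in> T \<longrightarrow> y \<in> T \<longrightarrow> x = (\<lambda>i. s * y i) \<longrightarrow> y = (\<lambda>i. 0)"
  proof (intro allI impI, rule ccontr)
    fix s :: 'a and x y assume s0: "s \<noteq> 0" and s1: "s \<noteq> 1" and x: "x \<in> T" and y: "y \<in> T"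
      and xy: "x = (\<lambda>i. s * y i)" and yn: "y \<noteq> (\<lambda>i. 0)"
    obtain j where j: "y j \<noteq> 0" using yn by auto
    define P0 where "P0 = (\<lambda>i. x0 i + (\<lambda>i. 0::'a) i)"
    define P1 where "P1 = (\<lambda>i. x0 i + y i)"
    define P2 where "P2 = (\<lambda>i. x0 i + x i)"
    have inC: "P0 \<in> C" "P1 \<in> C" "P2 \<in> C"
      unfolding CT P0_def P1_def P2_def by (rule imageI, rule TA(2)) (rule imageI, rule y, rule imageI, rule x)
    have d01: "P0 \<noteq> P1" using j by (auto simp: P0_def P1_def dest: fun_cong[where x=j])
    have d12: "P1 \<noteq> P2"
    proof
      assume "P1 = P2"
      then have "y j = s * y j" using xy by (auto simp: P1_def P2_def dest: fun_cong[where x=j])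
      then have "(s - 1) * y j = 0" by (simp add: algebra_simps)
      then show False using s1 j by simp
    qed
    have d02: "P0 \<noteq> P2" using j s0 xy by (auto simp: P0_def P2_def dest: fun_cong[where x=j])
    have ya: "y \<in> aspace 3" using y TA by auto
    have line: "is_line 3 (aline x0 y)" using x0 ya j unfolding is_line_def by blast
    have "P0 \<in> aline x0 y" unfolding aline_def P0_def by (rule CollectI, rule exI[where x=0]) simp
    moreover have "P1 \<in> aline x0 y" unfolding aline_def P1_def by (rule CollectI, rule exI[where x=1]) simp
    moreover have "P2 \<in> aline x0 y" unfolding aline_def P2_def xy by (rule CollectI, rule exI[where x=s]) simp
    ultimately have onL: "\<exists>L. is_line 3 L \<and> P0 \<in> L \<and> P1 \<in> L \<and> P2 \<in> L" using line by blast
    have cp: "\<And>x y z. x \<in> C \<Longrightarrow> y \<in> C \<Longrightarrow> z \<in> C \<Longrightarrow> x \<noteq> y \<Longrightarrow> y \<noteq> z \<Longrightarrow> x \<noteq> z \<Longrightarrow>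
        \<not> (\<exists>L. is_line 3 L \<and> x \<in> L \<and> y \<in> L \<and> z \<in> L)"
      using cap unfolding is_cap_def by blast
    show False using cp[OF inC d01 d12 d02] onL by blast
  qed
  have "good 3 T m" unfolding good_def by (intro conjI TA cT prp)
  then show ?thesis by blast
qed


lemma card_le_twice_image:
  assumes "finite A" and "\<And>x. x \<in> A \<Longrightarrow> \<exists>g. {y\<in>A. f y = f x} \<subseteq> {x, g}"
  shows "card A \<le> 2 * card (f ` A)"
proof -
  have "A = (\<Union>b\<in>f ` A. {y\<in>A. f y = b})" by auto
  then have "card A \<le> (\<Sum>b\<in>f ` A. card {y\<in>A. f y = b})"
    by (metis card_UN_le assms(1) finite_imageI)
  also have "\<dots> \<le> (\<Sum>b\<in>f ` A. 2)"
  proof (rule sum_mono)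
    fix b assume "b \<in> f ` A"
    then obtain x where x: "x \<in> A" "b = f x" by auto
    obtain g where "{y\<in>A. f y = f x} \<subseteq> {x, g}" using assms(2)[OF x(1)] by blast
    then have "card {y\<in>A. f y = b} \<le> card {x, g}" using x by (simp add: card_mono)
    also have "\<dots> \<le> 2" by (simp add: card_insert_if)
    finally show "card {y\<in>A. f y = b} \<le> 2" .
  qed
  finally show ?thesis by simp
qed

lemma three_on_line:
  fixes T :: "(nat \<Rightarrow> 'a::{field,finite}) set"
  assumes g: "good N T m" and c2: "(1::'a::{field,finite}) + 1 = 0"
    and j: "d j \<noteq> 0"
    and u: "u \<in> aline a d" "u \<in> T" and v: "v \<in> aline a d" "v \<in> T" and w: "w \<in> aline a d" "w \<in> T"
  shows "u = v \<or> v = w \<or> u = w"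
proof (rule ccontr)
  assume nd: "\<not> (u = v \<or> v = w \<or> u = w)"
  obtain t1 where t1: "u = (\<lambda>i. a i + t1 * d i)" using u by (auto simp: aline_def)
  obtain t2 where t2: "v = (\<lambda>i. a i + t2 * d i)" using v by (auto simp: aline_def)
  obtain t3 where t3: "w = (\<lambda>i. a i + t3 * d i)" using w by (auto simp: aline_def)
  have n12: "t1 \<noteq> t2" using nd t1 t2 by auto
  have n13: "t1 \<noteq> t3" using nd t1 t3 by auto
  have n23: "t2 \<noteq> t3" using nd t2 t3 by auto
  define x where "x = (\<lambda>i. w i + u i)"
  define y where "y = (\<lambda>i. v i + u i)"
  have xT: "x \<in> T" and yT: "y \<in> T" using g u v w by (auto simp: good_def x_def y_def)
  have mm: "\<And>p q::'a. p + q = p - q" using c2_minus[OF c2] by (metis diff_conv_add_uminus)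
  have xe: "x = (\<lambda>i. (t3 - t1) * d i)"
  proof
    fix i have "x i = w i - u i" unfolding x_def by (rule mm)
    also have "\<dots> = (t3 - t1) * d i" by (simp add: t1 t3 algebra_simps)
    finally show "x i = (t3 - t1) * d i" .
  qed
  have ye: "y = (\<lambda>i. (t2 - t1) * d i)"
  proof
    fix i have "y i = v i - u i" unfolding y_def by (rule mm)
    also have "\<dots> = (t2 - t1) * d i" by (simp add: t1 t2 algebra_simps)
    finally show "y i = (t2 - t1) * d i" .
  qed
  define \<sigma> where "\<sigma> = (t3 - t1) / (t2 - t1)"
  have s0: "\<sigma> \<noteq> 0" using n12 n13 by (simp add: \<sigma>_def)
  have s1: "\<sigma> \<noteq> 1" using n12 n23 by (simp add: \<sigma>_def)
  have "x = (\<lambda>i. \<sigma> * y i)" using n12 unfolding xe ye \<sigma>_def by auto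
  then have "y = (\<lambda>i. 0)" using g xT yT s0 s1 unfolding good_def by blast
  then have "(t2 - t1) * d j = 0" using ye by (metis)
  then show False using n12 j by simp
qed


lemma decomp:
  assumes g: "good N T m" and c2: "(1::'a::{field,finite}) + 1 = 0" and q: "card (UNIV::'a set) = m^2"
    and p: "p \<in> aspace N" and s0: "s \<noteq> 0" and s1: "s \<noteq> (1::'a)"
  shows "\<exists>ad. fst ad \<in> T \<and> snd ad \<in> T \<and> p = (\<lambda>i. fst ad i + s * snd ad i)"
proof -
  define \<phi> where "\<phi> = (\<lambda>(a::nat\<Rightarrow>'a,d::nat\<Rightarrow>'a). (\<lambda>i. a i + s * d i))"
  have mm: "\<And>p q::'a. p + q = p - q" using c2_minus[OF c2] by (metis diff_conv_add_uminus)
  have TA: "T \<subseteq> aspace N" using g by (simp add: good_def)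
  have finA: "finite (aspace N :: (nat \<Rightarrow> 'a) set)" using aspace_card by blast
  have finT: "finite T" using TA finA finite_subset by blast
  have inj: "inj_on \<phi> (T \<times> T)"
  proof (rule inj_onI, clarify)
    fix a d a' d' assume a: "a \<in> T" "d \<in> T" "a' \<in> T" "d' \<in> T" and e: "\<phi> (a, d) = \<phi> (a', d')"
    have ei: "\<And>i. a i + s * d i = a' i + s * d' i" using e unfolding \<phi>_def by (metis case_prod_conv)
    define x where "x = (\<lambda>i. a i + a' i)"
    define y where "y = (\<lambda>i. d i + d' i)"
    have xT: "x \<in> T" and yT: "y \<in> T" using g a by (auto simp: good_def x_def y_def)
    have "x = (\<lambda>i. s * y i)"
    proof
      fix i
      have "x i = a i - a' i" unfolding x_def by (rule mm)
      also have "\<dots> = s * d' i - s * d i" using ei[of i] by (simp add: algebra_simps)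
      also have "\<dots> = s * (d' i + d i)" unfolding mm[of "d' i" "d i"] by (simp add: right_diff_distrib)
      finally show "x i = s * y i" by (simp add: y_def add.commute)
    qed
    then have "y = (\<lambda>i. 0)" using g xT yT s0 s1 unfolding good_def by blast
    have dd: "d i = d' i" for i
    proof -
      have "d i + d' i = 0" using \<open>y = (\<lambda>i. 0)\<close> unfolding y_def by metis
      then have "d i = - d' i" by (simp add: eq_neg_iff_add_eq_0)
      then show ?thesis using c2_minus[OF c2] by simp
    qed
    then have "\<And>i. a i = a' i" using ei by simp
    then show "a = a' \<and> d = d'" using dd by auto
  qed
  have sub: "\<phi> ` (T \<times> T) \<subseteq> aspace N"
  proof
    fix z assume "z \<in> \<phi> ` (T \<times> T)"
    then obtain a d where ad: "a \<in> T" "d \<in> T" and z: "z = (\<lambda>i. a i + s * d i)" by (auto simp: \<phi>_def)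
    have "a \<in> aspace N" "d \<in> aspace N" using ad TA by auto
    then show "z \<in> aspace N" unfolding z by (simp add: aspace_def)
  qed
  have "card (\<phi> ` (T \<times> T)) = m^N * m^N" using inj g by (simp add: card_image card_cartesian_product good_def)
  also have "\<dots> = (m^2)^N" by (simp add: power_mult_distrib power2_eq_square)
  also have "\<dots> = card (aspace N :: (nat \<Rightarrow> 'a) set)"
  proof -
    have "card (aspace N :: (nat \<Rightarrow> 'a) set) = card (UNIV :: 'a set) ^ N" using aspace_card by blast
    then show ?thesis using q by simp
  qed
  finally have "\<phi> ` (T \<times> T) = aspace N" using card_subset_eq[OF finA sub] by simp
  then obtain ad where "ad \<in> T \<times> T" "p = \<phi> ad" using p by (metis imageE)
  then show ?thesis by (auto simp: \<phi>_def split: prod.splits)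
qed


lemma secants:
  fixes T :: "(nat \<Rightarrow> 'a::{field,finite}) set"
  assumes g: "good N T m" and c2: "(1::'a::{field,finite}) + 1 = 0" and q: "card (UNIV::'a set) = m^2"
    and p: "p \<in> aspace N" and pT: "p \<notin> T"
  shows "(real (card (UNIV :: 'a set)) - 2) / 2 \<le> real (card {L. is_secant N T L \<and> p \<in> L})"
proof -
  define S0 where "S0 = UNIV - {0, 1::'a}"
  have mm: "\<And>p q::'a. p + q = p - q" using c2_minus[OF c2] by (metis diff_conv_add_uminus)
  have TA: "T \<subseteq> aspace N" using g by (simp add: good_def)
  have "\<forall>s\<in>S0. \<exists>ad. fst ad \<in> T \<and> snd ad \<in> T \<and> p = (\<lambda>i. fst ad i + s * snd ad i)"
    using decomp[OF g c2 q p] by (auto simp: S0_def)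
  then obtain G where G: "\<And>s. s \<in> S0 \<Longrightarrow> fst (G s) \<in> T \<and> snd (G s) \<in> T \<and> p = (\<lambda>i. fst (G s) i + s * snd (G s) i)"
    by metis
  define Lf where "Lf = (\<lambda>s. aline (fst (G s)) (snd (G s)))"
  have nz: "\<exists>j. snd (G s) j \<noteq> 0" if s: "s \<in> S0" for s
  proof (rule ccontr)
    assume "\<not> (\<exists>j. snd (G s) j \<noteq> 0)"
    then have "p = fst (G s)" using G[OF s] by auto
    then show False using G[OF s] pT by auto
  qed
  have on0: "a \<in> aline a d" for a d :: "nat \<Rightarrow> 'a"
    unfolding aline_def by (rule CollectI, rule exI[where x=0]) simp
  have on1: "(\<lambda>i. a i + d i) \<in> aline a d" for a d :: "nat \<Rightarrow> 'a"
    unfolding aline_def by (rule CollectI, rule exI[where x=1]) simp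
  have onp: "p \<in> Lf s" if s: "s \<in> S0" for s
    unfolding Lf_def aline_def using G[OF s] by blast
  have sec: "is_secant N T (Lf s)" if s: "s \<in> S0" for s
  proof -
    obtain j where j: "snd (G s) j \<noteq> 0" using nz[OF s] by blast
    have "is_line N (Lf s)" unfolding is_line_def Lf_def using G[OF s] TA j by blast
    moreover have "fst (G s) \<in> Lf s \<inter> T" using on0 G[OF s] by (simp add: Lf_def)
    moreover have "(\<lambda>i. fst (G s) i + snd (G s) i) \<in> Lf s \<inter> T"
      using on1 G[OF s] g by (simp add: Lf_def good_def)
    moreover have "fst (G s) \<noteq> (\<lambda>i. fst (G s) i + snd (G s) i)"
      using j by (auto dest: fun_cong[where x=j])
    ultimately show ?thesis unfolding is_secant_def by blast
  qed
  have fib: "t = s \<or> t = s + 1" if s: "s \<in> S0" and t: "t \<in> S0" and e: "Lf t = Lf s" for s t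
  proof -
    define a where "a = fst (G s)"
    define d where "d = snd (G s)"
    define b where "b = fst (G t)"
    define f where "f = snd (G t)"
    obtain j where j: "d j \<noteq> 0" using nz[OF s] d_def by blast
    obtain k where k: "f k \<noteq> 0" using nz[OF t] f_def by blast
    have aT: "a \<in> T" and dT: "d \<in> T" and pa: "p = (\<lambda>i. a i + s * d i)" using G[OF s] a_def d_def by auto
    have bT: "b \<in> T" and fT: "f \<in> T" and pb: "p = (\<lambda>i. b i + t * f i)" using G[OF t] b_def f_def by auto
    have adT: "(\<lambda>i. a i + d i) \<in> T" using aT dT g by (simp add: good_def)
    have bfT: "(\<lambda>i. b i + f i) \<in> T" using bT fT g by (simp add: good_def)
    have L: "aline b f = aline a d" using e by (simp add: Lf_def a_def b_def d_def f_def)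
    have bL: "b \<in> aline a d" using on0[of b f] L by simp
    have bfL: "(\<lambda>i. b i + f i) \<in> aline a d" using on1[of b f] L by simp
    have nad: "a \<noteq> (\<lambda>i. a i + d i)" using j by (auto dest: fun_cong[where x=j])
    have nbf: "b \<noteq> (\<lambda>i. b i + f i)" using k by (auto dest: fun_cong[where x=k])
    have c1: "b = a \<or> b = (\<lambda>i. a i + d i)"
      using three_on_line[OF g c2 j on0 aT on1 adT bL bT] nad by metis
    have c2': "(\<lambda>i. b i + f i) = a \<or> (\<lambda>i. b i + f i) = (\<lambda>i. a i + d i)"
      using three_on_line[OF g c2 j on0 aT on1 adT bfL bfT] nad by metis
    have pj: "a j + s * d j = b j + t * f j" using pa pb by (metis)
    show ?thesis
    proof (cases "b = a")
      case True
      then have "(\<lambda>i. b i + f i) = (\<lambda>i. a i + d i)" using c2' nbf by auto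
      then have "b j + f j = a j + d j" by metis
      then have "f j = d j" using True by simp
      then have "s * d j = t * d j" using pj True by simp
      then show ?thesis using j by simp
    next
      case False
      then have bb: "b = (\<lambda>i. a i + d i)" using c1 by auto
      then have "(\<lambda>i. b i + f i) = a" using c2' nbf by auto
      then have "b j + f j = a j" by metis
      moreover have "b j = a j + d j" using bb by simp
      ultimately have "d j + f j = 0" by (simp add: algebra_simps)
      then have "f j = - d j" by (simp add: eq_neg_iff_add_eq_0 add.commute)
      then have "a j + s * d j = a j + d j - t * d j" using pj bb by simp
      then have "(s - 1 + t) * d j = 0" by (simp add: algebra_simps)
      then have "s - 1 + t = 0" using j by simp
      then have "t = 1 - s" by (simp add: algebra_simps)
      then show ?thesis using mm[of 1 s] by (simp add: add.commute)
    qed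
  qed
  have finA: "finite (aspace N :: (nat \<Rightarrow> 'a) set)" using aspace_card by blast
  have finSec: "finite {L. is_secant N T L \<and> p \<in> L}"
  proof (rule finite_subset[of _ "Pow (aspace N)"])
    show "{L. is_secant N T L \<and> p \<in> L} \<subseteq> Pow (aspace N)"
    proof
      fix L assume "L \<in> {L. is_secant N T L \<and> p \<in> L}"
      then have "is_line N L" by (simp add: is_secant_def)
      then obtain a d where "a \<in> aspace N" "d \<in> aspace N" "L = aline a d" unfolding is_line_def by blast
      then show "L \<in> Pow (aspace N)" using aline_sub by blast
    qed
    show "finite (Pow (aspace N :: (nat \<Rightarrow> 'a) set))" using finA by simp
  qed
  have "card S0 \<le> 2 * card (Lf ` S0)"
  proof (rule card_le_twice_image)
    show "finite S0" by simp
    fix s assume s: "s \<in> S0"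
    show "\<exists>h. {y \<in> S0. Lf y = Lf s} \<subseteq> {s, h}"
      using fib[OF s] by (intro exI[where x="s+1"]) blast
  qed
  also have "card (Lf ` S0) \<le> card {L. is_secant N T L \<and> p \<in> L}"
    using finSec sec onp by (intro card_mono) auto
  finally have le: "card S0 \<le> 2 * card {L. is_secant N T L \<and> p \<in> L}" by simp
  have cS0: "card S0 = card (UNIV :: 'a set) - 2" unfolding S0_def
    by (simp add: card_Diff_subset)
  have "card (UNIV :: 'a set) \<ge> 2"
  proof -
    have "card {0, 1::'a} \<le> card (UNIV :: 'a set)" by (rule card_mono) auto
    then show ?thesis by simp
  qed
  then have "real (card (UNIV :: 'a set)) - 2 = real (card S0)" using cS0 by simp
  then show ?thesis using le by simp
qed

lemma powr_sq:
  assumes "m > (0::nat)"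
  shows "real (m^2) powr r = real m powr (2 * r)"
proof -
  have e: "real (m^2) = real m powr 2" using assms by (simp add: powr_realpow)
  show ?thesis unfolding e by (rule powr_powr)
qed

theorem lemma4p2:
  fixes C :: "(nat \<Rightarrow> 'a::{field,finite}) set"
  assumes "even (card (UNIV :: 'a set))"
    and "\<exists>m::nat. card (UNIV :: 'a set) = m\<^sup>2"
    and "is_translation_cap 3 C"
    and "real (card C) = real (card (UNIV :: 'a set)) powr (3/2)"
  shows "\<forall>N::nat. N > 2 \<longrightarrow>
    (\<exists>K :: (nat \<Rightarrow> 'a) set. K \<subseteq> aspace N \<and> real (card K) \<le> real (card (UNIV :: 'a set)) powr (real N / 2) \<and>
       (\<forall>p \<in> aspace N - K.
          real (card {L. is_secant N K L \<and> p \<in> L}) \<ge> (real (card (UNIV :: 'a set)) - 2) / 2))"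
proof (intro allI impI)
  fix N :: nat assume N: "N > 2"
  have c2: "(1::'a) + 1 = 0" using char2 assms(1) by blast
  obtain m :: nat where q: "card (UNIV :: 'a set) = m^2" using assms(2) by blast
  have "card (UNIV :: 'a set) > 0" by (simp add: card_gt_0_iff)
  then have m0: "m > 0" using q by (cases m) auto
  have "real (card C) = real m powr 3" using assms(4) q powr_sq[OF m0, of "3/2"] by simp
  also have "\<dots> = real m ^ 3" using m0 powr_realpow[of "real m" 3] by simp
  finally have "card C = m^3" by (metis of_nat_eq_of_nat_power_cancel_iff)
  then obtain T3 :: "(nat \<Rightarrow> 'a) set" where g3: "good 3 T3 m" using good_3[OF assms(3)] by blast
  have "\<exists>K :: (nat \<Rightarrow> 'a) set. good N K m"
  proof (cases "even N")
    case True
    then have "N = 0 + 2 * (N div 2)" by simp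
    then show ?thesis using good_build[OF good_0 c2 q, of "N div 2"] by metis
  next
    case False
    then have "N = 3 + 2 * ((N - 3) div 2)" using N by presburger
    then show ?thesis using good_build[OF g3 c2 q, of "(N - 3) div 2"] by metis
  qed
  then obtain K :: "(nat \<Rightarrow> 'a) set" where gK: "good N K m" by blast
  have "real (card K) = real m ^ N" using gK by (simp add: good_def)
  also have "\<dots> = real m powr real N" using m0 by (simp add: powr_realpow)
  also have "\<dots> = real (card (UNIV :: 'a set)) powr (real N / 2)" using q powr_sq[OF m0, of "real N / 2"] by simp
  finally have cK: "real (card K) \<le> real (card (UNIV :: 'a set)) powr (real N / 2)" by simp
  have "K \<subseteq> aspace N" using gK by (simp add: good_def)
  moreover have "\<forall>p \<in> aspace N - K.
          real (card {L. is_secant N K L \<and> p \<in> L}) \<ge> (real (card (UNIV :: 'a set)) - 2) / 2"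
    using secants[OF gK c2 q] by blast
  ultimately show "\<exists>K :: (nat \<Rightarrow> 'a) set. K \<subseteq> aspace N \<and> real (card K) \<le> real (card (UNIV :: 'a set)) powr (real N / 2) \<and>
       (\<forall>p \<in> aspace N - K.
          real (card {L. is_secant N K L \<and> p \<in> L}) \<ge> (real (card (UNIV :: 'a set)) - 2) / 2)"
    using cK by blast
qed

end
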